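(* Let $B$ be a commutative ring, let $x,y\in B$ with $Bx+By=B$, let $\alpha\subset B$ be an ideal, and let $\nu_1,\ldots,\nu_p\subset B$ be prime ideals. Suppose that for every $a\in\alpha$ there exists $c_0$ (depending on $a$) such that $x+ay^c\in\bigcup_{i=1}^p\nu_i$ for all $c\ge c_0$. Then $Bx+\alpha\subset\nu_i$ for some $i$. *)

theory Defs
  imports "HOL-Algebra.Algebra"
begin

end

theory Submission
  imports Defs
begin

context cring
begin

lemma L_pow_prime:
  assumes "primeideal I R" "y \<in> carrier R" "y [^] (n::nat) \<in> I"
  shows "y \<in> I"
  using assms(3)
proof (induction n)
  case 0
  then have "\<one> \<in> I" by simp
  then have "I = carrier R" using assms(1) ideal.one_imp_carrier primeideal.axioms(1) by blast
  then show ?case using assms(1) primeideal.I_notcarr by blast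
next
  case (Suc n)
  have "y [^] n \<otimes> y \<in> I" using Suc.prems by simp
  then have "y [^] n \<in> I \<or> y \<in> I"
    using primeideal.I_prime[OF assms(1)] assms(2) by simp
  then show ?case using Suc.IH by blast
qed

lemma L_sub_mem:
  assumes "ideal I R" "u \<in> carrier R" "v \<in> carrier R" "u \<oplus> v \<in> I" "v \<in> I"
  shows "u \<in> I"
proof -
  have "(u \<oplus> v) \<oplus> \<ominus> v \<in> I"
    using assms additive_subgroup.a_closed additive_subgroup.a_inv_closed ideal.axioms(1) by metis
  moreover have "(u \<oplus> v) \<oplus> \<ominus> v = u" using assms(2,3) by (simp add: a_assoc r_neg)
  ultimately show ?thesis by simp
qed

lemma L_sub_mem2:
  assumes "ideal I R" "u \<in> carrier R" "v \<in> carrier R" "u \<oplus> v \<in> I" "u \<in> I"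
  shows "v \<in> I"
  using L_sub_mem[OF assms(1,3,2)] assms(4,5) assms(2,3) by (simp add: a_comm)

lemma L_t:
  assumes "finite S" "ideal \<alpha> R" "primeideal P R" "a0 \<in> \<alpha>" "a0 \<notin> P"
    "\<forall>i\<in>S. ideal (\<nu> i) R \<and> \<not> \<nu> i \<subseteq> P"
  shows "\<exists>t\<in>\<alpha>. t \<notin> P \<and> (\<forall>i\<in>S. t \<in> \<nu> i)"
  using assms(1,6)
proof (induction S rule: finite_induct)
  case empty
  then show ?case using assms(4,5) by blast
next
  case (insert k S)
  then obtain t where t: "t \<in> \<alpha>" "t \<notin> P" "\<forall>i\<in>S. t \<in> \<nu> i" by auto
  obtain s where s: "s \<in> \<nu> k" "s \<notin> P" using insert.prems by auto
  have sc: "s \<in> carrier R" using s(1) insert.prems ideal.axioms(1) additive_subgroup.a_subset by blast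
  have tc: "t \<in> carrier R" using t(1) assms(2) ideal.axioms(1) additive_subgroup.a_subset by blast
  have "t \<otimes> s \<in> \<alpha>" using ideal.I_r_closed[OF assms(2) t(1) sc] .
  moreover have "t \<otimes> s \<notin> P" using primeideal.I_prime[OF assms(3) tc sc] t(2) s(2) by blast
  moreover have "\<forall>i\<in>insert k S. t \<otimes> s \<in> \<nu> i"
  proof
    fix i assume "i \<in> insert k S"
    then show "t \<otimes> s \<in> \<nu> i"
    proof
      assume "i = k" then show ?thesis using ideal.I_l_closed[of "\<nu> k" R s t] insert.prems s(1) tc by auto
    next
      assume "i \<in> S" then show ?thesis using ideal.I_r_closed[of "\<nu> i" R t s] insert.prems t(3) sc by auto
    qed
  qed
  ultimately show ?case by blast
qed

lemma L_main:
  assumes "finite S" "x \<in> carrier R" "y \<in> carrier R" "b \<in> carrier R" "b' \<in> carrier R"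
    "b \<otimes> x \<oplus> b' \<otimes> y = \<one>" "ideal \<alpha> R"
    "\<forall>i\<in>S. primeideal (\<nu> i) R"
    "\<forall>a\<in>\<alpha>. \<exists>c0::nat. \<forall>c\<ge>c0. x \<oplus> a \<otimes> (y [^] c) \<in> (\<Union>i\<in>S. \<nu> i)"
  shows "\<exists>i\<in>S. x \<in> \<nu> i \<and> \<alpha> \<subseteq> \<nu> i"
  using assms(1,8,9)
proof (induction S rule: finite_psubset_induct)
  case (psubset S)
  have ycp: "\<And>c. y [^] (c::nat) \<in> carrier R" using assms(3) by simp
  have inc: "\<And>a. a \<in> \<alpha> \<Longrightarrow> a \<in> carrier R"
    using assms(7) ideal.axioms(1) additive_subgroup.a_subset by blast
  show ?case
  proof (cases "\<exists>i\<in>S. \<exists>j\<in>S. i \<noteq> j \<and> \<nu> i \<subseteq> \<nu> j")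
    case True
    then obtain i j where ij: "i\<in>S" "j\<in>S" "i\<noteq>j" "\<nu> i \<subseteq> \<nu> j" by blast
    have U: "(\<Union>k\<in>S-{i}. \<nu> k) = (\<Union>k\<in>S. \<nu> k)" using ij by blast
    have sub: "S-{i} \<subset> S" using ij by blast
    have pr: "\<forall>k\<in>S-{i}. primeideal (\<nu> k) R" using psubset.prems(1) by blast
    have hy: "\<forall>a\<in>\<alpha>. \<exists>c0::nat. \<forall>c\<ge>c0. x \<oplus> a \<otimes> (y [^] c) \<in> (\<Union>k\<in>S-{i}. \<nu> k)"
      unfolding U by (rule psubset.prems(2))
    have "\<exists>k\<in>S-{i}. x \<in> \<nu> k \<and> \<alpha> \<subseteq> \<nu> k"
      by (rule psubset.IH[OF sub pr hy])
    then show ?thesis by blast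
  next
    case False
    have zero: "\<zero> \<in> \<alpha>" using assms(7) ideal.axioms(1) additive_subgroup.zero_closed by blast
    obtain z0 where z0: "\<forall>c::nat\<ge>z0. x \<oplus> \<zero> \<otimes> (y [^] c) \<in> (\<Union>i\<in>S. \<nu> i)"
      using bspec[OF psubset.prems(2) zero] by blast
    have "x \<oplus> \<zero> \<otimes> (y [^] z0) \<in> (\<Union>i\<in>S. \<nu> i)" using z0[rule_format, OF le_refl] .
    then obtain j where j: "j \<in> S" by blast
    have Pj: "primeideal (\<nu> j) R" using j psubset.prems(1) by blast
    then have Ij: "ideal (\<nu> j) R" using primeideal.axioms(1) by blast
    show ?thesis
    proof (cases "\<forall>a\<in>\<alpha>. \<exists>c0::nat. \<forall>c\<ge>c0. x \<oplus> a \<otimes> (y [^] c) \<in> (\<Union>i\<in>S-{j}. \<nu> i)")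
      case True
      have sub: "S-{j} \<subset> S" using j by blast
      have pr: "\<forall>k\<in>S-{j}. primeideal (\<nu> k) R" using psubset.prems(1) by blast
      have "\<exists>k\<in>S-{j}. x \<in> \<nu> k \<and> \<alpha> \<subseteq> \<nu> k"
        by (rule psubset.IH[OF sub pr True])
      then show ?thesis by blast
    next
      case False2: False
      then obtain aj where aj1: "aj \<in> \<alpha>"
        and aj2: "\<not> (\<exists>c0::nat. \<forall>c\<ge>c0. x \<oplus> aj \<otimes> (y [^] c) \<in> (\<Union>i\<in>S-{j}. \<nu> i))"
        by (auto simp only: Ball_def)
      have aj: "aj \<in> \<alpha>"
        "\<forall>c0::nat. \<exists>c\<ge>c0. x \<oplus> aj \<otimes> (y [^] c) \<notin> (\<Union>i\<in>S-{j}. \<nu> i)"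
        using aj1 apply simp
        using aj2 by blast
      have ajc: "aj \<in> carrier R" using inc aj(1) .
      obtain d0 where d0: "\<forall>c::nat\<ge>d0. x \<oplus> aj \<otimes> (y [^] c) \<in> (\<Union>i\<in>S. \<nu> i)"
        using bspec[OF psubset.prems(2) aj(1)] by blast
      show ?thesis
      proof (cases "\<alpha> \<subseteq> \<nu> j")
        case True
        obtain c :: nat where c: "c \<ge> d0" "x \<oplus> aj \<otimes> (y [^] c) \<notin> (\<Union>i\<in>S-{j}. \<nu> i)"
          using spec[OF aj(2), of d0] by blast
        have "x \<oplus> aj \<otimes> (y [^] c) \<in> (\<Union>i\<in>S. \<nu> i)" using d0[rule_format, OF c(1)] .
        then have "x \<oplus> aj \<otimes> (y [^] c) \<in> \<nu> j" using c(2) by blast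
        moreover have "aj \<otimes> (y [^] c) \<in> \<nu> j"
          using ideal.I_r_closed[OF Ij] True aj(1) ycp by blast
        ultimately have "x \<in> \<nu> j" using L_sub_mem[OF Ij assms(2)] ajc ycp by blast
        then show ?thesis using True j by blast
      next
        case False3: False
        then obtain a0 where a0: "a0 \<in> \<alpha>" "a0 \<notin> \<nu> j" by blast
        have inc2: "\<forall>i\<in>S-{j}. ideal (\<nu> i) R \<and> \<not> \<nu> i \<subseteq> \<nu> j"
        proof
          fix i assume i: "i \<in> S-{j}"
          then have "primeideal (\<nu> i) R" using psubset.prems(1) by blast
          then have "ideal (\<nu> i) R" by (rule primeideal.axioms(1))
          moreover have "\<not> \<nu> i \<subseteq> \<nu> j" using False i j by blast
          ultimately show "ideal (\<nu> i) R \<and> \<not> \<nu> i \<subseteq> \<nu> j" by blast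
        qed
        have fS: "finite (S - {j})" using \<open>finite S\<close> by simp
        have "\<exists>t\<in>\<alpha>. t \<notin> \<nu> j \<and> (\<forall>i\<in>S-{j}. t \<in> \<nu> i)"
          by (rule L_t[OF fS assms(7) Pj a0 inc2])
        then obtain t where t: "t \<in> \<alpha>" "t \<notin> \<nu> j" "\<forall>i\<in>S-{j}. t \<in> \<nu> i"
          by blast
        have tc: "t \<in> carrier R" using inc t(1) .
        define a where "a = aj \<oplus> t"
        have a: "a \<in> \<alpha>" unfolding a_def
          by (rule additive_subgroup.a_closed[OF ideal.axioms(1)[OF assms(7)] aj(1) t(1)])
        obtain e0 where e0: "\<forall>c::nat\<ge>e0. x \<oplus> a \<otimes> (y [^] c) \<in> (\<Union>i\<in>S. \<nu> i)"
          using bspec[OF psubset.prems(2) a] by blast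
        obtain c :: nat where c: "c \<ge> max (max d0 e0) 1" "x \<oplus> aj \<otimes> (y [^] c) \<notin> (\<Union>i\<in>S-{j}. \<nu> i)"
          using spec[OF aj(2), of "max (max d0 e0) 1"] by blast
        have cd: "d0 \<le> c" "e0 \<le> c" "1 \<le> c" using c(1) by (simp_all only: max.bounded_iff)
        have "x \<oplus> a \<otimes> (y [^] c) \<in> (\<Union>i\<in>S. \<nu> i)" using e0[rule_format, OF cd(2)] .
        then obtain k where k: "k \<in> S" "x \<oplus> a \<otimes> (y [^] c) \<in> \<nu> k" by blast
        have Ik: "ideal (\<nu> k) R" using k(1) psubset.prems(1) primeideal.axioms(1) by blast
        have eq: "x \<oplus> a \<otimes> (y [^] c) = (x \<oplus> aj \<otimes> (y [^] c)) \<oplus> t \<otimes> (y [^] c)"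
          unfolding a_def using ajc tc ycp assms(2) by (simp add: l_distr a_assoc)
        have uc: "x \<oplus> aj \<otimes> (y [^] c) \<in> carrier R" using assms(2) ajc ycp by simp
        have vc: "t \<otimes> (y [^] c) \<in> carrier R" using tc ycp by simp
        have sum: "(x \<oplus> aj \<otimes> (y [^] c)) \<oplus> t \<otimes> (y [^] c) \<in> \<nu> k" using k(2) eq by simp
        show ?thesis
        proof (cases "k = j")
          case True
          have "x \<oplus> aj \<otimes> (y [^] c) \<in> (\<Union>i\<in>S. \<nu> i)" using d0[rule_format, OF cd(1)] .
          then have m1: "x \<oplus> aj \<otimes> (y [^] c) \<in> \<nu> j" using c(2) by blast
          have "t \<otimes> (y [^] c) \<in> \<nu> j"
            using L_sub_mem2[OF Ij uc vc _ m1] sum True by simp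
          then have "t \<in> \<nu> j \<or> y [^] c \<in> \<nu> j" using primeideal.I_prime[OF Pj tc ycp] by blast
          then have yj: "y \<in> \<nu> j" using t(2) L_pow_prime[OF Pj assms(3)] by blast
          obtain n where n: "c = Suc n" using cd(3) by (cases c) auto
          have "y [^] c = y [^] n \<otimes> y" using n by simp
          then have "y [^] c \<in> \<nu> j" using ideal.I_l_closed[OF Ij yj] ycp by simp
          then have "aj \<otimes> (y [^] c) \<in> \<nu> j" using ideal.I_l_closed[OF Ij _ ajc] by blast
          then have xj: "x \<in> \<nu> j" using L_sub_mem[OF Ij assms(2) _ m1] ajc ycp by blast
          have "b \<otimes> x \<in> \<nu> j" by (rule ideal.I_l_closed[OF Ij xj assms(4)])
          moreover have "b' \<otimes> y \<in> \<nu> j" by (rule ideal.I_l_closed[OF Ij yj assms(5)])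
          ultimately have "b \<otimes> x \<oplus> b' \<otimes> y \<in> \<nu> j"
            by (rule additive_subgroup.a_closed[OF ideal.axioms(1)[OF Ij]])
          then have "\<one> \<in> \<nu> j" using assms(6) by simp
          then have "\<nu> j = carrier R" using ideal.one_imp_carrier[OF Ij] by blast
          then show ?thesis using primeideal.I_notcarr[OF Pj] by simp
        next
          case False
          then have "t \<in> \<nu> k" using t(3) k(1) by blast
          then have "t \<otimes> (y [^] c) \<in> \<nu> k" using ideal.I_r_closed[OF Ik] ycp by blast
          then have "x \<oplus> aj \<otimes> (y [^] c) \<in> \<nu> k"
            by (rule L_sub_mem[OF Ik uc vc sum])
          then show ?thesis using c(2) k(1) False by blast
        qed
      qed
    qed
  qed
qed

end

theorem lemma7p1:
  fixes B (structure)
    and x y :: 'a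
    and \<alpha> :: "'a set"
    and \<nu> :: "nat \<Rightarrow> 'a set"
    and p :: nat
  assumes "cring B"
    and "x \<in> carrier B" and "y \<in> carrier B"
    and "{b \<otimes> x \<oplus> b' \<otimes> y | b b'. b \<in> carrier B \<and> b' \<in> carrier B} = carrier B"
    and "ideal \<alpha> B"
    and "\<forall>i\<in>{1..p}. primeideal (\<nu> i) B"
    and "\<forall>a\<in>\<alpha>. \<exists>c0::nat. \<forall>c\<ge>c0. x \<oplus> a \<otimes> (y [^] c) \<in> (\<Union>i\<in>{1..p}. \<nu> i)"
  shows "\<exists>i\<in>{1..p}. {b \<otimes> x \<oplus> a | b a. b \<in> carrier B \<and> a \<in> \<alpha>} \<subseteq> \<nu> i"
proof -
  interpret cring B by fact
  have "\<one> \<in> {b \<otimes> x \<oplus> b' \<otimes> y | b b'. b \<in> carrier B \<and> b' \<in> carrier B}"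
    using assms(4) by simp
  then have "\<exists>b b'. \<one> = b \<otimes> x \<oplus> b' \<otimes> y \<and> b \<in> carrier B \<and> b' \<in> carrier B"
    by simp
  then obtain b b' where bb0: "\<one> = b \<otimes> x \<oplus> b' \<otimes> y" "b \<in> carrier B" "b' \<in> carrier B"
    by (elim exE conjE)
  have bb: "b \<in> carrier B" "b' \<in> carrier B" "b \<otimes> x \<oplus> b' \<otimes> y = \<one>"
    using bb0 by simp_all
  obtain i where i: "i \<in> {1..p}" "x \<in> \<nu> i" "\<alpha> \<subseteq> \<nu> i"
    using L_main[OF finite_atLeastAtMost assms(2,3) bb(1,2,3) assms(5,6,7)] by blast
  have Ii: "ideal (\<nu> i) B" using assms(6) i(1) primeideal.axioms(1) by blast
  have "{b \<otimes> x \<oplus> a | b a. b \<in> carrier B \<and> a \<in> \<alpha>} \<subseteq> \<nu> i"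
  proof
    fix z assume "z \<in> {b \<otimes> x \<oplus> a | b a. b \<in> carrier B \<and> a \<in> \<alpha>}"
    then obtain b a where z: "z = b \<otimes> x \<oplus> a" "b \<in> carrier B" "a \<in> \<alpha>" by blast
    have "b \<otimes> x \<in> \<nu> i" using ideal.I_l_closed[OF Ii i(2) z(2)] .
    moreover have "a \<in> \<nu> i" using i(3) z(3) by blast
    ultimately show "z \<in> \<nu> i" using z(1) Ii ideal.axioms(1) additive_subgroup.a_closed by metis
  qed
  then show ?thesis using i(1) by blast
qed

end
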